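(* Fix speeds $v_1,v_2,v_3>0$ and turning-rate magnitudes $w_1,w_3>0$. Let LSL denote the CSC path with inputs $\mathbf{u}_1=(v_1,w_1)$, $\mathbf{u}_2=(v_2,0)$, $\mathbf{u}_3=(v_3,w_3)$, and RSR the CSC path with inputs $\mathbf{u}_1=(v_1,-w_1)$, $\mathbf{u}_2=(v_2,0)$, $\mathbf{u}_3=(v_3,-w_3)$. Then for every start pose $\mathbf{p}_0$ and every pose $\mathbf{p}_f=(x_f,y_f,\theta_f)$, $\mathbf{p}_f$ is reachable from $\mathbf{p}_0$ by the LSL path or by the RSR path (or both). Equivalently, for each $\theta_f$ the open discs $\{(x_f,y_f):(x_f-c)^2+(y_f-d)^2<r_{31}^2\}$ associated with LSL and with RSR are disjoint.
   Context: A pose is $\mathbf{p}=(x,y,\theta)$, heading understood modulo $2\pi$. An input is $\mathbf{u}=(v,\omega)$. The motion primitive $\mathrm{M}_{\mathbf{u},\tau}$ maps $(x,y,\theta)$ to: if $\omega\neq0$, $\big(x-\frac{v}{\omega}(\sin\theta-\sin(\theta+\omega\tau)),\ y+\frac{v}{\omega}(\cos\theta-\cos(\theta+\omega\tau)),\ \theta+\omega\tau\big)$; if $\omega=0$, $(x+v\tau\cos\theta,\ y+v\tau\sin\theta,\ \theta)$. For a path with fixed inputs $\mathbf{u}_1,\mathbf{u}_2,\mathbf{u}_3$, a pose $\mathbf{p}_f$ is reachable from $\mathbf{p}_0=(x_0,y_0,\theta_0)$ if there exist $\tau_1,\tau_2,\tau_3\ge0$, with $|\omega_i\tau_i|<2\pi$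 for turning segments, such that $\mathrm{M}_{\mathbf{u}_3,\tau_3}(\mathrm{M}_{\mathbf{u}_2,\tau_2}(\mathrm{M}_{\mathbf{u}_1,\tau_1}(\mathbf{p}_0)))$ has position $(x_f,y_f)$ and heading congruent to $\theta_f$ modulo $2\pi$. For a CSC path, $r_i=v_i/\omega_i$ ($i=1,3$), $r_{31}=r_3-r_1$, $c=x_0-r_1\sin\theta_0+r_3\sin\theta_f$, $d=y_0+r_1\cos\theta_0-r_3\cos\theta_f$; a CSC path reaches $\mathbf{p}_f$ iff $(x_f-c)^2+(y_f-d)^2\ge r_{31}^2$. *)

theory Defs
  imports Complex_Main
begin

type_synonym pose = "real \<times> real \<times> real"   (* (x, y, theta) *)
type_synonym input = "real \<times> real"         (* (v, omega) *)

definition motion :: "input \<Rightarrow> real \<Rightarrow> pose \<Rightarrow> pose" where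
  "motion u \<tau> p = (case u of (v, \<omega>) \<Rightarrow> case p of (x, y, \<theta>) \<Rightarrow>
     (if \<omega> \<noteq> 0 then
        (x - v / \<omega> * (sin \<theta> - sin (\<theta> + \<omega> * \<tau>)),
         y + v / \<omega> * (cos \<theta> - cos (\<theta> + \<omega> * \<tau>)),
         \<theta> + \<omega> * \<tau>)
      else (x + v * \<tau> * cos \<theta>, y + v * \<tau> * sin \<theta>, \<theta>)))"

definition admissible :: "input \<Rightarrow> real \<Rightarrow> bool" where
  "admissible u \<tau> \<longleftrightarrow> \<tau> \<ge> 0 \<and> (snd u \<noteq> 0 \<longrightarrow> \<bar>snd u * \<tau>\<bar> < 2 * pi)"

definition heading_cong :: "real \<Rightarrow> real \<Rightarrow> bool" where
  "heading_cong a b \<longleftrightarrow> (\<exists>k::int. a = b + 2 * pi * of_int k)"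

definition reachable :: "input \<Rightarrow> input \<Rightarrow> input \<Rightarrow> pose \<Rightarrow> pose \<Rightarrow> bool" where
  "reachable u1 u2 u3 p0 pf \<longleftrightarrow>
     (\<exists>\<tau>1 \<tau>2 \<tau>3. admissible u1 \<tau>1 \<and> admissible u2 \<tau>2 \<and> admissible u3 \<tau>3 \<and>
        (let q = motion u3 \<tau>3 (motion u2 \<tau>2 (motion u1 \<tau>1 p0)) in
          fst q = fst pf \<and> fst (snd q) = fst (snd pf) \<and>
          heading_cong (snd (snd q)) (snd (snd pf))))"

end

theory Submission imports Defs begin

lemma angle_reach:
  fixes \<omega> \<theta> \<alpha> :: real
  assumes "\<omega> \<noteq> 0"
  shows "\<exists>\<tau> (k::int). \<tau> \<ge> 0 \<and> \<bar>\<omega> * \<tau>\<bar> < 2 * pi \<and> \<theta> + \<omega> * \<tau> = \<alpha> + 2 * pi * of_int k"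
proof (cases "\<omega> > 0")
  case True
  define k where "k = \<lfloor>(\<alpha> - \<theta>) / (2*pi)\<rfloor>"
  define t where "t = (\<alpha> - \<theta>) - 2*pi*of_int k"
  have "of_int k \<le> (\<alpha> - \<theta>) / (2*pi)" "(\<alpha> - \<theta>) / (2*pi) < of_int k + 1"
    unfolding k_def by linarith+
  hence t: "0 \<le> t" "t < 2*pi" unfolding t_def using pi_gt_zero
    by (simp_all add: field_simps)
  show ?thesis
  proof (intro exI conjI)
    have e: "\<omega> * (t/\<omega>) = t" using True by simp
    show "t/\<omega> \<ge> 0" using t True by simp
    show "\<bar>\<omega> * (t/\<omega>)\<bar> < 2*pi" using t e by simp
    show "\<theta> + \<omega> * (t/\<omega>) = \<alpha> + 2*pi*of_int (-k)" using e by (simp add: t_def)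
  qed
next
  case False
  hence neg: "\<omega> < 0" using assms by simp
  define k where "k = \<lceil>(\<alpha> - \<theta>) / (2*pi)\<rceil>"
  define t where "t = (\<alpha> - \<theta>) - 2*pi*of_int k"
  have "of_int k \<ge> (\<alpha> - \<theta>) / (2*pi)" "(\<alpha> - \<theta>) / (2*pi) > of_int k - 1"
    unfolding k_def by linarith+
  hence t: "t \<le> 0" "t > -2*pi" unfolding t_def using pi_gt_zero
    by (simp_all add: field_simps)
  show ?thesis
  proof (intro exI conjI)
    have e: "\<omega> * (t/\<omega>) = t" using neg by simp
    show "t/\<omega> \<ge> 0" using t neg by (simp add: divide_nonpos_neg)
    show "\<bar>\<omega> * (t/\<omega>)\<bar> < 2*pi" using t e by simp
    show "\<theta> + \<omega> * (t/\<omega>) = \<alpha> + 2*pi*of_int (-k)" using e by (simp add: t_def)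
  qed
qed

lemma polar:
  fixes X Y r :: real
  assumes "X\<^sup>2 + Y\<^sup>2 \<ge> r\<^sup>2"
  shows "\<exists>L \<phi>. L \<ge> 0 \<and> X = L * cos \<phi> - r * sin \<phi> \<and> Y = L * sin \<phi> + r * cos \<phi>"
proof -
  define L where "L = sqrt (X\<^sup>2 + Y\<^sup>2 - r\<^sup>2)"
  define N where "N = X\<^sup>2 + Y\<^sup>2"
  have L2: "L\<^sup>2 = N - r\<^sup>2" unfolding L_def N_def by (metis assms diff_ge_0_iff_ge real_sqrt_pow2)
  have L0: "L \<ge> 0" unfolding L_def using assms by simp
  show ?thesis
  proof (cases "N = 0")
    case True
    hence "X = 0" "Y = 0" unfolding N_def by (simp_all add: sum_power2_eq_zero_iff)
    moreover have "r\<^sup>2 \<le> 0" using assms True unfolding N_def by simp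
    hence "r = 0" by simp
    ultimately show ?thesis using L0 by auto
  next
    case False
    have Np: "N > 0" using False unfolding N_def
      by (metis add_nonneg_nonneg less_eq_real_def zero_le_power2)
    define a where "a = (X*L + Y*r)/N"
    define b where "b = (Y*L - X*r)/N"
    have "a\<^sup>2 + b\<^sup>2 = ((X*L + Y*r)\<^sup>2 + (Y*L - X*r)\<^sup>2) / N\<^sup>2"
      unfolding a_def b_def by (simp add: power_divide add_divide_distrib[symmetric] diff_divide_distrib[symmetric])
    also have "(X*L + Y*r)\<^sup>2 + (Y*L - X*r)\<^sup>2 = N * (L\<^sup>2 + r\<^sup>2)"
      unfolding N_def by (simp add: power2_eq_square algebra_simps)
    also have "\<dots> = N\<^sup>2" using L2 by (simp add: power2_eq_square)
    finally have "a\<^sup>2 + b\<^sup>2 = 1" using Np by simp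
    then obtain \<phi> where ph: "a = cos \<phi>" "b = sin \<phi>" by (rule sincos_total_2pi)
    have "L * a - r * b = X * (L\<^sup>2 + r\<^sup>2) / N"
      unfolding a_def b_def using Np by (simp add: field_simps power2_eq_square)
    hence e1: "L * a - r * b = X" using L2 Np by simp
    have "L * b + r * a = Y * (L\<^sup>2 + r\<^sup>2) / N"
      unfolding a_def b_def using Np by (simp add: field_simps power2_eq_square)
    hence e2: "L * b + r * a = Y" using L2 Np by simp
    show ?thesis using e1 e2 ph L0 by auto
  qed
qed

lemma csc_reach:
  fixes v1 v2 v3 \<omega>1 \<omega>3 x0 y0 \<theta>0 xf yf \<theta>f :: real
  assumes w1: "\<omega>1 \<noteq> 0" and w3: "\<omega>3 \<noteq> 0" and v2: "v2 > 0"
  and ineq: "(xf - (x0 - v1/\<omega>1 * sin \<theta>0 + v3/\<omega>3 * sin \<theta>f))\<^sup>2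
           + (yf - (y0 + v1/\<omega>1 * cos \<theta>0 - v3/\<omega>3 * cos \<theta>f))\<^sup>2 \<ge> (v3/\<omega>3 - v1/\<omega>1)\<^sup>2"
  shows "reachable (v1, \<omega>1) (v2, 0) (v3, \<omega>3) (x0, y0, \<theta>0) (xf, yf, \<theta>f)"
proof -
  define r1 where "r1 = v1/\<omega>1"
  define r3 where "r3 = v3/\<omega>3"
  obtain L \<phi> where L: "L \<ge> 0"
    and X: "xf - (x0 - r1 * sin \<theta>0 + r3 * sin \<theta>f) = L * cos \<phi> - (r3 - r1) * sin \<phi>"
    and Y: "yf - (y0 + r1 * cos \<theta>0 - r3 * cos \<theta>f) = L * sin \<phi> + (r3 - r1) * cos \<phi>"
    using polar[OF ineq] unfolding r1_def r3_def by blast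
  obtain \<tau>1 k1 where t1: "\<tau>1 \<ge> 0" "\<bar>\<omega>1 * \<tau>1\<bar> < 2 * pi"
     "\<theta>0 + \<omega>1 * \<tau>1 = \<phi> + 2 * pi * of_int k1"
    using angle_reach[OF w1] by blast
  have s1: "sin (\<theta>0 + \<omega>1 * \<tau>1) = sin \<phi>" "cos (\<theta>0 + \<omega>1 * \<tau>1) = cos \<phi>"
    using sin_cos_eq_iff t1(3) by blast+
  obtain \<tau>3 k3 where t3: "\<tau>3 \<ge> 0" "\<bar>\<omega>3 * \<tau>3\<bar> < 2 * pi"
     "(\<theta>0 + \<omega>1 * \<tau>1) + \<omega>3 * \<tau>3 = \<theta>f + 2 * pi * of_int k3"
    using angle_reach[OF w3] by blast
  have s3: "sin (\<theta>0 + \<omega>1 * \<tau>1 + \<omega>3 * \<tau>3) = sin \<theta>f"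
           "cos (\<theta>0 + \<omega>1 * \<tau>1 + \<omega>3 * \<tau>3) = cos \<theta>f"
    using sin_cos_eq_iff t3(3) by blast+
  define \<tau>2 where "\<tau>2 = L / v2"
  have t2: "\<tau>2 \<ge> 0" "v2 * \<tau>2 = L" using L v2 unfolding \<tau>2_def by simp_all
  show ?thesis
    unfolding reachable_def
  proof (intro exI conjI)
    show "admissible (v1, \<omega>1) \<tau>1" "admissible (v2, 0) \<tau>2" "admissible (v3, \<omega>3) \<tau>3"
      using t1 t2 t3 by (simp_all add: admissible_def)
    let ?q = "motion (v3, \<omega>3) \<tau>3 (motion (v2, 0) \<tau>2 (motion (v1, \<omega>1) \<tau>1 (x0, y0, \<theta>0)))"
    have q: "?q = (x0 - r1 * (sin \<theta>0 - sin \<phi>) + L * cos \<phi> - r3 * (sin \<phi> - sin \<theta>f),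
                  y0 + r1 * (cos \<theta>0 - cos \<phi>) + L * sin \<phi> + r3 * (cos \<phi> - cos \<theta>f),
                  \<theta>0 + \<omega>1 * \<tau>1 + \<omega>3 * \<tau>3)"
      using w1 w3 s1 s3 t2 by (simp add: motion_def r1_def r3_def)
    show "let q = ?q in fst q = fst (xf, yf, \<theta>f) \<and> fst (snd q) = fst (snd (xf, yf, \<theta>f)) \<and>
          heading_cong (snd (snd q)) (snd (snd (xf, yf, \<theta>f)))"
      unfolding q Let_def heading_cong_def using X Y t3(3)
      by (auto simp: algebra_simps)
  qed
qed

lemma disc_disjoint:
  fixes r1 r3 x0 y0 t0 xf yf tf :: real
  assumes "r1 > 0" "r3 > 0"
  shows "(xf - (x0 - r1 * sin t0 + r3 * sin tf))\<^sup>2 + (yf - (y0 + r1 * cos t0 - r3 * cos tf))\<^sup>2 \<ge> (r3 - r1)\<^sup>2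
       \<or> (xf - (x0 + r1 * sin t0 - r3 * sin tf))\<^sup>2 + (yf - (y0 - r1 * cos t0 + r3 * cos tf))\<^sup>2 \<ge> (r3 - r1)\<^sup>2"
proof (rule ccontr)
  assume "\<not> ?thesis"
  hence A: "(xf - (x0 - r1 * sin t0 + r3 * sin tf))\<^sup>2 + (yf - (y0 + r1 * cos t0 - r3 * cos tf))\<^sup>2 < (r3 - r1)\<^sup>2"
    and B: "(xf - (x0 + r1 * sin t0 - r3 * sin tf))\<^sup>2 + (yf - (y0 - r1 * cos t0 + r3 * cos tf))\<^sup>2 < (r3 - r1)\<^sup>2"
    by auto
  define u1 where "u1 = xf - (x0 - r1 * sin t0 + r3 * sin tf)"
  define u2 where "u2 = yf - (y0 + r1 * cos t0 - r3 * cos tf)"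
  define w1 where "w1 = xf - (x0 + r1 * sin t0 - r3 * sin tf)"
  define w2 where "w2 = yf - (y0 - r1 * cos t0 + r3 * cos tf)"
  have par: "(u1 - w1)\<^sup>2 + (u2 - w2)\<^sup>2 \<le> 2 * (u1\<^sup>2 + u2\<^sup>2) + 2 * (w1\<^sup>2 + w2\<^sup>2)"
    using sum_squares_ge_zero[of "u1 + w1" "u2 + w2"]
    by (simp add: power2_eq_square algebra_simps)
  have dot: "sin t0 * sin tf + cos t0 * cos tf \<le> 1"
  proof -
    have "0 \<le> (sin t0 - sin tf)\<^sup>2 + (cos t0 - cos tf)\<^sup>2" by simp
    also have "\<dots> = 2 - 2 * (sin t0 * sin tf + cos t0 * cos tf)"
      by (simp add: power2_diff algebra_simps)
    finally show ?thesis by simp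
  qed
  have "(u1 - w1)\<^sup>2 + (u2 - w2)\<^sup>2 = 4 * (r1\<^sup>2 + r3\<^sup>2 - 2 * (r1 * r3) * (sin t0 * sin tf + cos t0 * cos tf))"
  proof -
    have "(u1 - w1)\<^sup>2 + (u2 - w2)\<^sup>2 = (2*r3 * sin tf - 2*r1 * sin t0)\<^sup>2 + (2*r1 * cos t0 - 2*r3 * cos tf)\<^sup>2"
      unfolding u1_def u2_def w1_def w2_def by (simp add: power2_eq_square algebra_simps)
    also have "\<dots> = 4 * (r1\<^sup>2 * ((sin t0)\<^sup>2 + (cos t0)\<^sup>2) + r3\<^sup>2 * ((sin tf)\<^sup>2 + (cos tf)\<^sup>2)
                      - 2 * (r1 * r3) * (sin t0 * sin tf + cos t0 * cos tf))"
      by (simp add: power2_eq_square algebra_simps del: sin_cos_squared_add sin_cos_squared_add2 sin_cos_squared_add3)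
    finally show ?thesis by (simp only: sin_cos_squared_add mult_1_right)
  qed
  moreover have "2 * (r1 * r3) * (sin t0 * sin tf + cos t0 * cos tf) \<le> 2 * (r1 * r3)"
    using dot assms by (simp add: mult_left_le)
  ultimately have "(u1 - w1)\<^sup>2 + (u2 - w2)\<^sup>2 \<ge> 4 * (r3 - r1)\<^sup>2"
    by (simp add: power2_diff algebra_simps)
  moreover have "u1\<^sup>2 + u2\<^sup>2 < (r3 - r1)\<^sup>2" "w1\<^sup>2 + w2\<^sup>2 < (r3 - r1)\<^sup>2"
    using A B unfolding u1_def u2_def w1_def w2_def by simp_all
  ultimately show False using par by argo
qed

theorem theorem3:
  fixes v1 v2 v3 w1 w3 :: real and p0 pf :: pose
  assumes "v1 > 0" "v2 > 0" "v3 > 0" "w1 > 0" "w3 > 0"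
  shows "reachable (v1, w1) (v2, 0) (v3, w3) p0 pf \<or>
         reachable (v1, - w1) (v2, 0) (v3, - w3) p0 pf"
proof -
  obtain x0 y0 t0 where p0: "p0 = (x0, y0, t0)" by (cases p0) auto
  obtain xf yf tf where pf: "pf = (xf, yf, tf)" by (cases pf) auto
  have r: "v1 / w1 > 0" "v3 / w3 > 0" using assms by simp_all
  have n1: "v1 / (- w1) = - (v1 / w1)" and n3: "v3 / (- w3) = - (v3 / w3)" by simp_all
  from disc_disjoint[OF r, of xf x0 t0 tf yf y0]
  show ?thesis
  proof
    assume h: "(v3 / w3 - v1 / w1)\<^sup>2 \<le> (xf - (x0 - v1 / w1 * sin t0 + v3 / w3 * sin tf))\<^sup>2 +
        (yf - (y0 + v1 / w1 * cos t0 - v3 / w3 * cos tf))\<^sup>2"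
    show ?thesis unfolding p0 pf
      using csc_reach[of w1 w3 v2 v3 v1 xf x0 t0 tf yf y0] h assms by simp
  next
    assume h: "(v3 / w3 - v1 / w1)\<^sup>2 \<le> (xf - (x0 + v1 / w1 * sin t0 - v3 / w3 * sin tf))\<^sup>2 +
        (yf - (y0 - v1 / w1 * cos t0 + v3 / w3 * cos tf))\<^sup>2"
    have h': "(v3 / (- w3) - v1 / (- w1))\<^sup>2 \<le> (xf - (x0 - v1 / (- w1) * sin t0 + v3 / (- w3) * sin tf))\<^sup>2 +
        (yf - (y0 + v1 / (- w1) * cos t0 - v3 / (- w3) * cos tf))\<^sup>2"
      using h unfolding n1 n3 by (simp add: power2_commute)
    show ?thesis unfolding p0 pf
      using csc_reach[of "- w1" "- w3" v2 v3 v1 xf x0 t0 tf yf y0] h' assms by simp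
  qed
qed
end
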